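(* For positive integers $x$ and $y$, $$\binom{y}{2} + \binom{\lceil 2x/y \rceil}{2} < x + y - 1$$ holds if and only if either $y = 2$ and $x \in \{1,2\}$, or $y = 3$ and $x = 3$.
   Context: $\binom{m}{2} = m(m-1)/2$ for a nonnegative integer $m$, and $\lceil \cdot \rceil$ is the ceiling function. *)

theory Defs
  imports Complex_Main
begin

end

theory Submission
  imports Defs
begin

lemma ceil_eq:
  fixes x y :: nat
  assumes "y > 0"
  shows "nat \<lceil>real (2 * x) / real y\<rceil> = (2 * x + y - 1) div y"
proof -
  have "\<lceil>real (2 * x) / real y\<rceil> = int ((2 * x + y - 1) div y)"
  proof (rule ceiling_unique)
    let ?q = "(2 * x + y - 1) div y"
    let ?n = "2 * x + y - 1"
    have e: "?q * y + ?n mod y = ?n" by (rule div_mult_mod_eq)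
    have m: "?n mod y < y" using assms by simp
    have d1: "?q * y \<le> 2*x + y - 1" using e m by linarith
    have "2*x + y - 1 < ?q * y + y" using e m by linarith
    then have d2: "2*x + y - 1 < (?q + 1) * y" by (simp add: algebra_simps)
    note d = d1 d2
    have a: "2 * x \<le> ?q * y" using d(2) assms by (simp add: algebra_simps)
    have b: "?q * y < 2 * x + y" using d(1) assms by linarith
    have "real (2*x) \<le> real (?q * y)" using a by linarith
    then show "real (2 * x) / real y \<le> real_of_int (int ?q)"
      using assms by (simp add: divide_le_eq)
    have "real (?q * y) < real (2 * x + y)" using b by (simp only: of_nat_less_iff)
    then have "real ?q * real y - real y < real (2*x)" by simp
    then show "real_of_int (int ?q) - 1 < real (2 * x) / real y"
      using assms by (simp add: less_divide_eq algebra_simps)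
  qed
  then show ?thesis by simp
qed

lemma ceil_bounds:
  fixes x y :: nat
  assumes "y > 0"
  shows "2 * x \<le> ((2 * x + y - 1) div y) * y" "((2 * x + y - 1) div y) * y < 2 * x + y"
proof -
  let ?q = "(2 * x + y - 1) div y"
  let ?n = "2 * x + y - 1"
  have e: "?q * y + ?n mod y = ?n" by (rule div_mult_mod_eq)
  have m: "?n mod y < y" using assms by simp
  show "?q * y < 2 * x + y" using e m by linarith
  have "2*x + y - 1 < ?q * y + y" using e m by linarith
  then show "2 * x \<le> ?q * y" by linarith
qed

lemma bound:
  fixes X Y C :: int
  assumes "Y * (Y - 1) + C * (C - 1) < 2 * X + 2 * Y - 2" "2 * X \<le> C * Y"
  shows "Y \<le> 5 \<and> C \<le> 3"
proof -
  have "(Y - C)^2 \<ge> 0" by simp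
  then have h: "(Y - 3)^2 + (C - 1)^2 < 6" using assms by (simp add: power2_eq_square algebra_simps)
  have "Y \<le> 5"
  proof (rule ccontr)
    assume "\<not> Y \<le> 5" then have "Y - 3 \<ge> 3" by simp
    then have "(Y - 3)^2 \<ge> 9" using power_mono[of 3 "Y - 3" 2] by simp
    then show False using h by (smt (verit) zero_le_power2)
  qed
  moreover have "C \<le> 3"
  proof (rule ccontr)
    assume "\<not> C \<le> 3" then have "C - 1 \<ge> 3" by simp
    then have "(C - 1)^2 \<ge> 9" using power_mono[of 3 "C - 1" 2] by simp
    then show False using h by (smt (verit) zero_le_power2)
  qed
  ultimately show ?thesis by simp
qed

theorem lemma2:
  fixes x y :: nat
  assumes "x > 0" and "y > 0"
  shows "(y choose 2) + (nat \<lceil>real (2 * x) / real y\<rceil> choose 2) < x + y - 1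
         \<longleftrightarrow> (y = 2 \<and> x \<in> {1, 2}) \<or> (y = 3 \<and> x = 3)"
proof -
  define c where "c = (2 * x + y - 1) div y"
  have cc: "nat \<lceil>real (2 * x) / real y\<rceil> = c" unfolding c_def by (rule ceil_eq[OF assms(2)])
  have a: "2 * x \<le> c * y" and b: "c * y < 2 * x + y" unfolding c_def using ceil_bounds[OF assms(2)] by auto
  have ch: "2 * (n choose 2) = n * (n - 1)" for n :: nat
  proof -
    have "even (n * (n - 1))" by (cases n) auto
    then show ?thesis by (simp add: choose_two)
  qed
  show ?thesis unfolding cc
  proof
    assume L: "(y choose 2) + (c choose 2) < x + y - 1"
    then have "2 * (y choose 2) + 2 * (c choose 2) < 2 * x + 2 * y - 2" by linarith
    then have L2: "y * (y - 1) + c * (c - 1) < 2 * x + 2 * y - 2" by (simp only: ch)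
    have L3: "int y * (int y - 1) + int c * (int c - 1) < 2 * int x + 2 * int y - 2"
    proof -
      have c1: "c \<ge> 1" using a assms by (cases c) auto
      have i: "int (y * (y - 1) + c * (c - 1)) < int (2 * x + 2 * y - 2)"
        using L2 by (simp only: of_nat_less_iff)
      have "2 * x + 2 * y \<ge> 2" using assms by linarith
      then show ?thesis using i c1 assms by (simp add: of_nat_diff)
    qed
    have "int y \<le> 5 \<and> int c \<le> 3"
      by (rule bound[OF L3]) (use a in \<open>simp flip: of_nat_mult\<close>)
    then have yb: "y \<le> 5" and cb: "c \<le> 3" by auto
    have "c * y \<le> 15" using mult_le_mono[OF cb yb] by simp
    then have xb: "x \<le> 7" using a by linarith
    have "y = 1 \<or> y = 2 \<or> y = 3 \<or> y = 4 \<or> y = 5" using yb assms by linarith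
    moreover have "x = 1 \<or> x = 2 \<or> x = 3 \<or> x = 4 \<or> x = 5 \<or> x = 6 \<or> x = 7"
      using xb assms by linarith
    ultimately show "(y = 2 \<and> x \<in> {1, 2}) \<or> (y = 3 \<and> x = 3)"
      using L unfolding c_def by (elim disjE) (simp_all add: choose_two)
  next
    assume "(y = 2 \<and> x \<in> {1, 2}) \<or> (y = 3 \<and> x = 3)"
    then show "(y choose 2) + (c choose 2) < x + y - 1"
      unfolding c_def by (auto simp: choose_two)
  qed
qed

end
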